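(* Let $m\geq 1$, $n\geq 3$ and $p\geq 2$ be integers, and let $i,j\in V$. If $P$ is a walk in $D^m_n$ of length $pn-1$ from $i$ to $j$, then exactly one of the following holds: (a) $i=1$ and $j=(k-1)(n-1)+n$ for some $k\in\{1,\ldots,m\}$, and $P=P_{1j}\circ C^{r_{p-1}}\circ\cdots\circ C^{r_1}$ for some $r_1,\ldots,r_{p-1}\in\{1,\ldots,m\}$, where $P_{1j}$ is the unique walk of length $n-1$ from $1$ to $j$; (b) $j=1$ and $i=(k-1)(n-1)+2$ for some $k\in\{1,\ldots,m\}$, and $P=C^{r_{p-1}}\circ\cdots\circ C^{r_1}\circ P_{i1}$ for some $r_1,\ldots,r_{p-1}\in\{1,\ldots,m\}$, where $P_{i1}$ is the unique walk of length $n-1$ from $i$ to $1$; (c) there exist $k,r\in\{1,\ldots,m\}$ and $\ell\in\{3,\ldots,n\}$ with $i=(k-1)(n-1)+\ell$ and $j=(r-1)(n-1)+(\ell-1)$, and $P=Q_{1j}\circ C^{r_{p-1}}\circ\cdots\circ C^{r_1}\circ Q_{i1}$ for some $r_1,\ldots,r_{p-1}\in\{1,\ldots,m\}$, where $Q_{i1}$ is the shortest walk from $i$ to $1$, $Q_{1j}$ is the shortest walk from $1$ to $j$, and $Q_{1j}\circ Q_{i1}$ is the unique walk of length $n-1$ from $i$ to $j$.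
   Context: For integers $m\geq 1$, $n\geq 3$, the oriented Dutch windmill graph $D^m_n$ is the directed graph with vertex set $V=\{1,2,\ldots,m(n-1)+1\}$ whose directed edges $(a,b)$ are exactly: $(1,(k-1)(n-1)+2)$ for $k\in\{1,\ldots,m\}$; $((k-1)(n-1)+i,(k-1)(n-1)+i+1)$ for $k\in\{1,\ldots,m\}$ and $i\in\{2,\ldots,n-1\}$; and $((k-1)(n-1)+n,1)$ for $k\in\{1,\ldots,m\}$. A walk is a sequence of vertices $\langle v_1,\ldots,v_r\rangle$ in which each $(v_t,v_{t+1})$ is an edge; its length is $r-1$. For $k\in\{1,\ldots,m\}$, $C^k$ is the closed walk $\langle 1,(k-1)(n-1)+2,\ldots,(k-1)(n-1)+n,1\rangle$ of length $n$. If $P=\langle v_1,\ldots,v_r\rangle$ and $Q=\langle w_1,\ldots,w_s\rangle$ are walks with $w_1=v_r$, then $Q\circ P=\langle v_1,\ldots,v_r,w_2,\ldots,w_s\rangle$ (first traverse $P$, then $Q$). *)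

theory Defs
  imports Main
begin

text \<open>Oriented Dutch windmill graph D^m_n on vertex set {1..m(n-1)+1}.
  Walks are nonempty vertex lists; the length of a walk P is length P - 1.\<close>

definition dw_V :: "nat \<Rightarrow> nat \<Rightarrow> nat set" where
  "dw_V m n = {1..m*(n-1)+1}"

definition dw_edge :: "nat \<Rightarrow> nat \<Rightarrow> nat \<Rightarrow> nat \<Rightarrow> bool" where
  "dw_edge m n a b \<longleftrightarrow>
     (\<exists>k\<in>{1..m}. a = 1 \<and> b = (k-1)*(n-1)+2) \<or>
     (\<exists>k\<in>{1..m}. \<exists>i\<in>{2..n-1}. a = (k-1)*(n-1)+i \<and> b = (k-1)*(n-1)+i+1) \<or>
     (\<exists>k\<in>{1..m}. a = (k-1)*(n-1)+n \<and> b = 1)"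

definition is_walk :: "nat \<Rightarrow> nat \<Rightarrow> nat list \<Rightarrow> bool" where
  "is_walk m n P \<longleftrightarrow> P \<noteq> [] \<and> set P \<subseteq> dw_V m n \<and>
     (\<forall>t. t + 1 < length P \<longrightarrow> dw_edge m n (P!t) (P!(t+1)))"

definition walk_from_to :: "nat \<Rightarrow> nat \<Rightarrow> nat \<Rightarrow> nat \<Rightarrow> nat list \<Rightarrow> bool" where
  "walk_from_to m n i j P \<longleftrightarrow> is_walk m n P \<and> hd P = i \<and> last P = j"

text \<open>Q \<circ> P: first traverse P, then Q (assumes hd Q = last P).\<close>
definition wcomp :: "nat list \<Rightarrow> nat list \<Rightarrow> nat list" where
  "wcomp Q P = P @ tl Q"

definition cyc :: "nat \<Rightarrow> nat \<Rightarrow> nat list" where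
  "cyc n k = [1] @ map (\<lambda>i. (k-1)*(n-1)+i) [2..<n+1] @ [1]"

fun cycs :: "nat \<Rightarrow> (nat \<Rightarrow> nat) \<Rightarrow> nat \<Rightarrow> nat list" where
  "cycs n r 0 = [1]"
| "cycs n r (Suc q) = wcomp (cyc n (r (Suc q))) (cycs n r q)"

definition the_walk :: "nat \<Rightarrow> nat \<Rightarrow> nat \<Rightarrow> nat \<Rightarrow> nat \<Rightarrow> nat list" where
  "the_walk m n i j L = (THE w. walk_from_to m n i j w \<and> length w = L + 1)"

definition shortest_walk :: "nat \<Rightarrow> nat \<Rightarrow> nat \<Rightarrow> nat \<Rightarrow> nat list" where
  "shortest_walk m n i j = (THE w. walk_from_to m n i j w \<and>
      (\<forall>w'. walk_from_to m n i j w' \<longrightarrow> length w \<le> length w'))"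

definition case_a :: "nat \<Rightarrow> nat \<Rightarrow> nat \<Rightarrow> nat \<Rightarrow> nat \<Rightarrow> nat list \<Rightarrow> bool" where
  "case_a m n p i j P \<longleftrightarrow> i = 1 \<and> (\<exists>k\<in>{1..m}. j = (k-1)*(n-1)+n) \<and>
     (\<exists>r. (\<forall>t\<in>{1..p-1}. r t \<in> {1..m}) \<and>
          P = wcomp (the_walk m n 1 j (n-1)) (cycs n r (p-1)))"

definition case_b :: "nat \<Rightarrow> nat \<Rightarrow> nat \<Rightarrow> nat \<Rightarrow> nat \<Rightarrow> nat list \<Rightarrow> bool" where
  "case_b m n p i j P \<longleftrightarrow> j = 1 \<and> (\<exists>k\<in>{1..m}. i = (k-1)*(n-1)+2) \<and>
     (\<exists>r. (\<forall>t\<in>{1..p-1}. r t \<in> {1..m}) \<and>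
          P = wcomp (cycs n r (p-1)) (the_walk m n i 1 (n-1)))"

definition case_c :: "nat \<Rightarrow> nat \<Rightarrow> nat \<Rightarrow> nat \<Rightarrow> nat \<Rightarrow> nat list \<Rightarrow> bool" where
  "case_c m n p i j P \<longleftrightarrow>
     (\<exists>k\<in>{1..m}. \<exists>r\<in>{1..m}. \<exists>l\<in>{3..n}. i = (k-1)*(n-1)+l \<and> j = (r-1)*(n-1)+(l-1)) \<and>
     (\<exists>rs. (\<forall>t\<in>{1..p-1}. rs t \<in> {1..m}) \<and>
          P = wcomp (shortest_walk m n 1 j) (wcomp (cycs n rs (p-1)) (shortest_walk m n i 1))) \<and>
     wcomp (shortest_walk m n 1 j) (shortest_walk m n i 1) = the_walk m n i j (n-1) \<and>
     (\<exists>!w. walk_from_to m n i j w \<and> length w = n)"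

end

theory Submission
  imports Defs
begin

lemma bv_inj:
  fixes n k k' l l' :: nat
  assumes "n \<ge> 3" "k \<ge> 1" "k' \<ge> 1" "2 \<le> l" "l \<le> n" "2 \<le> l'" "l' \<le> n"
    and eq: "(k-1)*(n-1)+l = (k'-1)*(n-1)+l'"
  shows "k = k' \<and> l = l'"
proof -
  define N where "N = n - 1"
  have N: "N \<ge> 2" using assms N_def by auto
  have e: "(k-1)*N + (l-2) = (k'-1)*N + (l'-2)" using eq assms unfolding N_def by auto
  have l1: "l - 2 < N" "l' - 2 < N" using assms N_def by auto
  have "((k-1)*N + (l-2)) div N = k-1" using l1 N by simp
  moreover have "((k'-1)*N + (l'-2)) div N = k'-1" using l1 N by simp
  moreover have "((k-1)*N + (l-2)) mod N = l-2" using l1 N by simp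
  moreover have "((k'-1)*N + (l'-2)) mod N = l'-2" using l1 N by simp
  ultimately show ?thesis using e assms by (metis Suc_diff_1 le_add_diff_inverse2 less_le_trans nat_1_add_1 numeral_le_one_iff one_le_numeral semiring_norm(70) zero_less_one) 
qed

lemma walk_edge: "is_walk m n w \<Longrightarrow> t+1 < length w \<Longrightarrow> dw_edge m n (w!t) (w!(t+1))"
  unfolding is_walk_def by blast

lemma stepA:
  assumes "is_walk m n w" "t+1 < length w" "w!t = (k-1)*(n-1)+l" "k \<in> {1..m}" "2 \<le> l" "l < n" "n \<ge> 3"
  shows "w!(t+1) = (k-1)*(n-1)+(l+1)"
proof -
  have "dw_edge m n (w!t) (w!(t+1))" using walk_edge assms by blast
  then consider (a) k' where "k'\<in>{1..m}" "w!t = 1"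
    | (b) k' i' where "k'\<in>{1..m}" "i'\<in>{2..n-1}" "w!t = (k'-1)*(n-1)+i'" "w!(t+1) = (k'-1)*(n-1)+i'+1"
    | (c) k' where "k'\<in>{1..m}" "w!t = (k'-1)*(n-1)+n"
    unfolding dw_edge_def by blast
  then show ?thesis
  proof cases
    case a then show ?thesis using assms by simp
  next
    case (b k' i')
    then have "k = k' \<and> l = i'" using bv_inj[of n k k' l i'] assms by auto
    then show ?thesis using b by simp
  next
    case (c k')
    then have "k = k' \<and> l = n" using bv_inj[of n k k' l n] assms by auto
    then show ?thesis using assms by simp
  qed
qed

lemma stepEnd:
  assumes "is_walk m n w" "t+1 < length w" "w!t = (k-1)*(n-1)+n" "k \<in> {1..m}" "n \<ge> 3"
  shows "w!(t+1) = 1"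
proof -
  have "dw_edge m n (w!t) (w!(t+1))" using walk_edge assms by blast
  then consider (a) k' where "k'\<in>{1..m}" "w!t = 1"
    | (b) k' i' where "k'\<in>{1..m}" "i'\<in>{2..n-1}" "w!t = (k'-1)*(n-1)+i'"
    | (c) k' where "k'\<in>{1..m}" "w!t = (k'-1)*(n-1)+n" "w!(t+1) = 1"
    unfolding dw_edge_def by blast
  then show ?thesis
  proof cases
    case a then show ?thesis using assms by simp
  next
    case (b k' i')
    then have "k = k' \<and> n = i'" using bv_inj[of n k k' n i'] assms by auto
    then show ?thesis using b assms by auto
  next
    case (c k')
    then show ?thesis by simp
  qed
qed

lemma stepHub:
  assumes "is_walk m n w" "t+1 < length w" "w!t = 1" "n \<ge> 3"
  shows "\<exists>k\<in>{1..m}. w!(t+1) = (k-1)*(n-1)+2"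
proof -
  have "dw_edge m n (w!t) (w!(t+1))" using walk_edge assms by blast
  then consider (a) k' where "k'\<in>{1..m}" "w!(t+1) = (k'-1)*(n-1)+2"
    | (b) k' i' where "k'\<in>{1..m}" "i'\<in>{2..n-1}" "w!t = (k'-1)*(n-1)+i'"
    | (c) k' where "k'\<in>{1..m}" "w!t = (k'-1)*(n-1)+n"
    unfolding dw_edge_def by blast
  then show ?thesis
  proof cases
    case a then show ?thesis by blast
  next
    case (b k' i')
    then show ?thesis using assms by auto
  next
    case (c k')
    then show ?thesis using assms by auto
  qed
qed

lemma runA:
  assumes "is_walk m n w" "w!t = (k-1)*(n-1)+l" "k \<in> {1..m}" "2 \<le> l" "n \<ge> 3"
  shows "l + d \<le> n \<Longrightarrow> t + d < length w \<Longrightarrow> w!(t+d) = (k-1)*(n-1)+(l+d)"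
proof (induction d)
  case 0 then show ?case using assms by simp
next
  case (Suc d)
  then have "w!(t+d) = (k-1)*(n-1)+(l+d)" by simp
  then have "w!(t+d+1) = (k-1)*(n-1)+(l+d+1)"
    using stepA[of m n w "t+d" k "l+d"] assms Suc.prems by simp
  then show ?case by simp
qed

lemma runEnd:
  assumes "is_walk m n w" "w!t = (k-1)*(n-1)+l" "k \<in> {1..m}" "2 \<le> l" "l \<le> n" "n \<ge> 3"
    "t + (n-l+1) < length w"
  shows "w!(t+(n-l+1)) = 1"
proof -
  have "w!(t+(n-l)) = (k-1)*(n-1)+n" using runA[OF assms(1-4,6), of "n-l"] assms by simp
  then show ?thesis using stepEnd[of m n w "t+(n-l)" k] assms by simp
qed

lemma is_walk_drop: "is_walk m n w \<Longrightarrow> a < length w \<Longrightarrow> is_walk m n (drop a w)"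
  unfolding is_walk_def using set_drop_subset[of a w] by (auto simp: add.commute add.left_commute)

lemma is_walk_take: "is_walk m n w \<Longrightarrow> 0 < a \<Longrightarrow> is_walk m n (take a w)"
  unfolding is_walk_def using set_take_subset[of a w] by auto

lemma is_walk_wcomp:
  assumes P: "is_walk m n P" and Q: "is_walk m n Q" and h: "last P = hd Q"
  shows "is_walk m n (wcomp Q P)"
  unfolding is_walk_def wcomp_def
proof (intro conjI allI impI)
  show "P @ tl Q \<noteq> []" using P unfolding is_walk_def by simp
  show "set (P @ tl Q) \<subseteq> dw_V m n" using P Q unfolding is_walk_def
    by (metis Un_subset_iff list.set_sel(2) set_append subset_code(1) tl_Nil)
next
  fix t assume t: "t + 1 < length (P @ tl Q)"
  have Pne: "P \<noteq> []" and Qne: "Q \<noteq> []" using P Q unfolding is_walk_def by auto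
  consider (1) "t+1 < length P" | (2) "t+1 = length P" | (3) "t \<ge> length P" by linarith
  then show "dw_edge m n ((P @ tl Q) ! t) ((P @ tl Q) ! (t + 1))"
  proof cases
    case 1 then show ?thesis using walk_edge[OF P 1] by (simp add: nth_append)
  next
    case 2
    have a: "(P @ tl Q) ! t = Q!0" proof -
      have "t = length P - 1" using 2 by simp
      then show ?thesis using h Pne Qne by (simp add: nth_append last_conv_nth hd_conv_nth)
    qed
    have b: "(P @ tl Q) ! (t+1) = Q!1" using 2 t by (simp add: nth_append nth_tl)
    have "1 < length Q" using 2 t by simp
    then show ?thesis using a b walk_edge[OF Q, of 0] by simp
  next
    case 3
    define s where "s = t - length P"
    have a: "(P @ tl Q) ! t = Q!(s+1)" using 3 t s_def by (simp add: nth_append nth_tl)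
    have b: "(P @ tl Q) ! (t+1) = Q!(s+1+1)" using 3 t s_def
      by (simp add: nth_append nth_tl Suc_diff_le)
    have "s+1+1 < length Q" using 3 t s_def by simp
    then show ?thesis using a b walk_edge[OF Q, of "s+1"] by simp
  qed
qed

lemma cyc_len: "n \<ge> 3 \<Longrightarrow> length (cyc n k) = n+1"
  unfolding cyc_def by simp

lemma cyc_nth:
  assumes "n \<ge> 3" "e \<le> n"
  shows "cyc n k ! e = (if e = 0 \<or> e = n then 1 else (k-1)*(n-1)+(e+1))"
  using assms unfolding cyc_def
  by (auto simp: nth_append nth_Cons' )

lemma cycs_len: "n \<ge> 3 \<Longrightarrow> length (cycs n r q) = q*n+1"
  by (induction q) (auto simp: wcomp_def cyc_len)

lemma cycs_last: "n \<ge> 3 \<Longrightarrow> last (cycs n r q) = 1"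
  by (induction q) (auto simp: wcomp_def cyc_def)

lemma cycs_cong: "(\<forall>t\<in>{1..q}. r t = r' t) \<Longrightarrow> cycs n r q = cycs n r' q"
  by (induction q) auto


lemma cycs_nth_last: "n \<ge> 3 \<Longrightarrow> cycs n r q ! (q*n) = 1"
  using cycs_last[of n r q] cycs_len[of n r q]
  by (metis add_diff_cancel_right' last_conv_nth list.size(3) zero_neq_one add_is_0)

lemma lemC:
  assumes W: "is_walk m n w" and n3: "n \<ge> 3" and w0: "w!0 = 1"
  shows "q*n < length w \<Longrightarrow> \<exists>r. (\<forall>t\<in>{1..q}. r t \<in> {1..m}) \<and> take (q*n+1) w = cycs n r q"
proof (induction q)
  case 0 then show ?case using w0 by (auto simp: take_Suc_conv_app_nth)
next
  case (Suc q)
  then obtain r where r: "\<forall>t\<in>{1..q}. r t \<in> {1..m}" "take (q*n+1) w = cycs n r q" by auto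
  have len: "q*n + n < length w" using Suc.prems by simp
  have wq: "w!(q*n) = 1"
  proof -
    have "take (q*n+1) w ! (q*n) = 1" using r(2) cycs_nth_last n3 by simp
    then show ?thesis by simp
  qed
  obtain k where k: "k\<in>{1..m}" "w!(q*n+1) = (k-1)*(n-1)+2"
    using stepHub[OF W, of "q*n"] wq len n3 by auto
  have run: "w!(q*n+1+d) = (k-1)*(n-1)+(2+d)" if "d \<le> n-2" for d
    using runA[OF W k(2) k(1), of d] that len n3 by simp
  have fin: "w!(q*n+1+(n-2+1)) = 1"
    using runEnd[OF W k(2) k(1)] len n3 by simp
  define r' where "r' = r(Suc q := k)"
  have c1: "cycs n r' q = cycs n r q" using cycs_cong[of q r' r] unfolding r'_def by auto
  have seg: "take n (drop (q*n+1) w) = tl (cyc n k)"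
  proof (rule nth_equalityI)
    show "length (take n (drop (q * n + 1) w)) = length (tl (cyc n k))"
      using len cyc_len[OF n3] by simp
  next
    fix e assume e: "e < length (take n (drop (q * n + 1) w))"
    then have e': "e < n" by simp
    have lhs: "take n (drop (q * n + 1) w) ! e = w!(q*n+1+e)" using e' len by simp
    have rhs: "tl (cyc n k) ! e = cyc n k ! (e+1)" using e' cyc_len[OF n3] by (simp add: nth_tl)
    show "take n (drop (q * n + 1) w) ! e = tl (cyc n k) ! e"
    proof (cases "e = n-1")
      case True
      then have "q*n+1+e = q*n+1+(n-2+1)" using n3 by simp
      then show ?thesis using lhs rhs fin cyc_nth[OF n3, of "e+1" k] True n3 by simp
    next
      case False
      then have "e \<le> n-2" using e' by simp
      then show ?thesis using lhs rhs run[of e] cyc_nth[OF n3, of "e+1" k] e' n3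
        by (simp add: add.commute)
    qed
  qed
  have "take (Suc q*n+1) w = take (q*n+1) w @ take n (drop (q*n+1) w)"
    by (metis add.commute add.left_commute mult_Suc take_add)
  also have "\<dots> = cycs n r' (Suc q)" using seg r(2) c1 by (simp add: wcomp_def r'_def)
  finally have "take (Suc q*n+1) w = cycs n r' (Suc q)" .
  moreover have "\<forall>t\<in>{1..Suc q}. r' t \<in> {1..m}" using r k unfolding r'_def by auto
  ultimately show ?case by blast
qed

lemma det_nonhub:
  assumes W: "is_walk m n w" and W': "is_walk m n w'" and n3: "n \<ge> 3"
    and h: "w!0 = (k-1)*(n-1)+l" "w'!0 = (k-1)*(n-1)+l" "k\<in>{1..m}" "2 \<le> l" "l \<le> n"
    and len: "length w = length w'" "length w \<le> n-l+2"
  shows "w = w'"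
proof (rule nth_equalityI)
  show "length w = length w'" by (rule len(1))
next
  fix e assume e: "e < length w"
  show "w!e = w'!e"
  proof (cases "e \<le> n-l")
    case True
    then show ?thesis using runA[OF W h(1) h(3,4) n3, of e] runA[OF W' h(2) h(3,4) n3, of e] e len h by simp
  next
    case False
    then have "e = n-l+1" using e len by simp
    then show ?thesis using runEnd[OF W h(1) h(3,4,5) n3] runEnd[OF W' h(2) h(3,4,5) n3] e len by simp
  qed
qed

lemma det_hub:
  assumes W: "is_walk m n w" and W': "is_walk m n w'" and n3: "n \<ge> 3"
    and h: "w!0 = 1" "w'!0 = 1" and len: "length w = L+1" "length w' = L+1" "1 \<le> L" "L \<le> n-1"
    and lst: "last w = last w'"
  shows "w = w'"
proof -
  obtain k where k: "k\<in>{1..m}" "w!1 = (k-1)*(n-1)+2" using stepHub[OF W, of 0] h len n3 by auto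
  obtain k' where k': "k'\<in>{1..m}" "w'!1 = (k'-1)*(n-1)+2" using stepHub[OF W', of 0] h len n3 by auto
  have r: "w!(1+d) = (k-1)*(n-1)+(2+d)" if "d \<le> L-1" for d
    using runA[OF W k(2) k(1), of d] that len n3 by simp
  have r': "w'!(1+d) = (k'-1)*(n-1)+(2+d)" if "d \<le> L-1" for d
    using runA[OF W' k'(2) k'(1), of d] that len n3 by simp
  have "w \<noteq> []" "w' \<noteq> []" using len by auto
  then have "last w = w!L" "last w' = w'!L" using len by (auto simp: last_conv_nth)
  then have "(k-1)*(n-1)+(2+(L-1)) = (k'-1)*(n-1)+(2+(L-1))"
    using r[of "L-1"] r'[of "L-1"] lst len by simp
  then have kk: "k = k'" using k k' n3 by auto
  show ?thesis
  proof (rule nth_equalityI)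
    show "length w = length w'" using len by simp
  next
    fix e assume e: "e < length w"
    show "w!e = w'!e"
    proof (cases e)
      case 0 then show ?thesis using h by simp
    next
      case (Suc d)
      then show ?thesis using r[of d] r'[of d] kk e len by simp
    qed
  qed
qed

lemma lb_nonhub:
  assumes W: "is_walk m n w" and n3: "n \<ge> 3"
    and h: "w!0 = (k-1)*(n-1)+l" "k\<in>{1..m}" "2 \<le> l" "l \<le> n" and lst: "last w = 1"
  shows "length w \<ge> n-l+2"
proof (rule ccontr)
  assume "\<not> ?thesis"
  then have a: "length w - 1 \<le> n - l" by simp
  have ne: "w \<noteq> []" using W unfolding is_walk_def by simp
  have d1: "l + (length w - 1) \<le> n" "0 + (length w - 1) < length w" using a h(4) ne by auto
  have "w!(0 + (length w - 1)) = (k-1)*(n-1)+(l+(length w - 1))"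
    using runA[OF W h(1) h(2,3) n3 d1] .
  moreover have "last w = w!(0 + (length w - 1))" using ne by (simp add: last_conv_nth)
  ultimately have "last w \<ge> 2" using h(3) by linarith
  then show False using lst by simp
qed

lemma lb_hub:
  assumes W: "is_walk m n w" and n3: "n \<ge> 3" and h: "w!0 = 1"
    and lst: "last w = (r-1)*(n-1)+(L+1)" "r\<in>{1..m}" "1 \<le> L" "L \<le> n-2"
  shows "length w \<ge> L+1"
proof (rule ccontr)
  assume "\<not> ?thesis"
  then have a: "length w \<le> L" by simp
  have ne: "w \<noteq> []" using W unfolding is_walk_def by simp
  define e where "e = length w - 1"
  have le: "last w = w!e" using ne e_def by (simp add: last_conv_nth)
  show False
  proof (cases e)
    case 0 then show False using le h lst by simp
  next
    case (Suc d)
    obtain k where k: "k\<in>{1..m}" "w!1 = (k-1)*(n-1)+2" proof -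
      have "1 < length w" using Suc e_def by simp
      then show ?thesis using stepHub[OF W, of 0] h n3 that by auto
    qed
    have d1: "2 + d \<le> n" "1 + d < length w" using Suc e_def a lst(4) n3 by auto
    have "w!(1+d) = (k-1)*(n-1)+(2+d)" using runA[OF W k(2) k(1) _ n3 d1] by simp
    moreover have "w!(1+d) = last w" using le Suc by simp
    ultimately have "(k-1)*(n-1)+(2+d) = (r-1)*(n-1)+(L+1)" using lst(1) by simp
    moreover have "L + 1 \<le> n" "k \<ge> 1" "r \<ge> 1" using lst k n3 by auto
    ultimately have "2+d = L+1" using bv_inj[of n k r "2+d" "L+1"] n3 d1 lst(3) by auto
    then show False using Suc e_def a by simp
  qed
qed

lemma the_walk_eq:
  assumes "walk_from_to m n a b w0" "length w0 = L+1"
    "\<And>w. walk_from_to m n a b w \<Longrightarrow> length w = L+1 \<Longrightarrow> w = w0"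
  shows "the_walk m n a b L = w0"
  unfolding the_walk_def
proof (rule the_equality)
  show "walk_from_to m n a b w0 \<and> length w0 = L + 1" using assms(1,2) by blast
next
  fix w assume "walk_from_to m n a b w \<and> length w = L + 1"
  then show "w = w0" using assms(3) by blast
qed

lemma shortest_eq:
  assumes "walk_from_to m n a b w0"
    "\<And>w. walk_from_to m n a b w \<Longrightarrow> length w0 \<le> length w"
    "\<And>w. walk_from_to m n a b w \<Longrightarrow> length w = length w0 \<Longrightarrow> w = w0"
  shows "shortest_walk m n a b = w0"
  unfolding shortest_walk_def
proof (rule the_equality)
  show "walk_from_to m n a b w0 \<and> (\<forall>w'. walk_from_to m n a b w' \<longrightarrow> length w0 \<le> length w')"
    using assms(1,2) by blast
next
  fix w assume H: "walk_from_to m n a b w \<and> (\<forall>w'. walk_from_to m n a b w' \<longrightarrow> length w \<le> length w')"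
  then have "length w \<le> length w0" using assms(1) by blast
  moreover have "length w0 \<le> length w" using H assms(2) by blast
  ultimately have "length w = length w0" by simp
  then show "w = w0" using H assms(3) by blast
qed


lemma hd0: "0 < length xs \<Longrightarrow> hd xs = xs ! 0" by (simp add: hd_conv_nth)

lemma last_take_Suc: "k < length xs \<Longrightarrow> last (take (Suc k) xs) = xs ! k"
  by (simp add: take_Suc_conv_app_nth)

lemma tl_drop_Suc: "tl (drop k xs) = drop (Suc k) xs"
  by (simp add: drop_Suc tl_drop)

lemma split_at: "xs = take (Suc k) xs @ tl (drop k xs)"
  by (simp add: tl_drop_Suc)

lemma ne1: "l \<ge> 2 \<Longrightarrow> (k-1)*(n-1)+l \<noteq> (1::nat)" by simp

theorem lemma2p5:
  fixes m n p i j :: nat and P :: "nat list"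
  assumes "m \<ge> 1" and "n \<ge> 3" and "p \<ge> 2"
    and "i \<in> dw_V m n" and "j \<in> dw_V m n"
    and "walk_from_to m n i j P" and "length P - 1 = p*n - 1"
  shows "(case_a m n p i j P \<and> \<not> case_b m n p i j P \<and> \<not> case_c m n p i j P) \<or>
         (\<not> case_a m n p i j P \<and> case_b m n p i j P \<and> \<not> case_c m n p i j P) \<or>
         (\<not> case_a m n p i j P \<and> \<not> case_b m n p i j P \<and> case_c m n p i j P)"
proof -
  note n3 = assms(2)
  have W: "is_walk m n P" and hdP: "hd P = i" and lastP: "last P = j"
    using assms(6) unfolding walk_from_to_def by auto
  have Pne: "P \<noteq> []" using W unfolding is_walk_def by simp
  have pn: "p*n \<ge> 6" using mult_le_mono[OF assms(3) assms(2)] by simp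
  have lenP: "length P = p*n" using assms(7) pn Pne by (cases "length P") auto
  have P0: "P!0 = i" using hdP Pne by (simp add: hd0)
  define q where "q = p - 1"
  have "p = q + 1" using assms(3) q_def by simp
  then have pq: "p*n = q*n + n" by simp
  have q1: "q \<ge> 1" using assms(3) q_def by simp
  have nb: "\<not> case_b m n p i j P" if "i = 1"
    using that unfolding case_b_def by auto
  have nc1: "\<not> case_c m n p i j P" if "i = 1"
    using that unfolding case_c_def by auto
  have na: "\<not> case_a m n p i j P" if "i \<noteq> 1"
    using that unfolding case_a_def by auto
  have nc2: "\<not> case_c m n p i j P" if "j = 1"
    using that unfolding case_c_def by auto
  have nb2: "\<not> case_b m n p i j P" if "j \<noteq> 1"
    using that unfolding case_b_def by auto
  show ?thesis
  proof (cases "i = 1")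
    case True
    obtain r where r: "\<forall>t\<in>{1..q}. r t \<in> {1..m}" "take (q*n+1) P = cycs n r q"
      using lemC[OF W n3, of q] P0 True lenP pq n3 by auto
    define R where "R = drop (q*n) P"
    have lenR: "length R = n" using R_def lenP pq by simp
    have WR: "is_walk m n R" using is_walk_drop[OF W] R_def lenP pq n3 by simp
    have R0: "R!0 = 1"
    proof -
      have "take (q*n+1) P ! (q*n) = 1" using r(2) cycs_nth_last n3 by simp
      then show ?thesis unfolding R_def using lenP pq n3 by simp
    qed
    obtain k where k: "k\<in>{1..m}" "R!1 = (k-1)*(n-1)+2"
      using stepHub[OF WR, of 0] R0 lenR n3 by auto
    have d1: "2 + (n-2) \<le> n" "1 + (n-2) < length R" using lenR n3 by auto
    have X: "R!(1+(n-2)) = (k-1)*(n-1)+(2+(n-2))" using runA[OF WR k(2) k(1) _ n3 d1] by simp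
    have e2: "2+(n-2) = n" using n3 by simp
    have "R!(1+(n-2)) = (k-1)*(n-1)+n" using X by (simp only: e2)
    moreover have "last R = R!(1+(n-2))"
    proof -
      have "R \<noteq> []" "1+(n-2) = length R - 1" using lenR n3 by auto
      then show ?thesis by (simp add: last_conv_nth)
    qed
    moreover have "last R = j" using lastP R_def lenP pq n3 by simp
    ultimately have j: "j = (k-1)*(n-1)+n" by metis
    have wR: "walk_from_to m n 1 j R" unfolding walk_from_to_def
      using WR R0 \<open>last R = j\<close> lenR n3 by (simp add: hd0)
    have tw: "the_walk m n 1 j (n-1) = R"
    proof (rule the_walk_eq)
      show "walk_from_to m n 1 j R" by (rule wR)
      show "length R = n - 1 + 1" using lenR n3 by simp
    next
      fix w assume w: "walk_from_to m n 1 j w" "length w = n - 1 + 1"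
      have Ww: "is_walk m n w" and "hd w = 1" "last w = j" using w unfolding walk_from_to_def by auto
      then have "w!0 = 1" using w(2) by (simp add: hd0)
      then show "w = R" using det_hub[OF Ww WR n3, of "n-1"] R0 w(2) lenR n3 \<open>last w = j\<close> \<open>last R = j\<close>
        by simp
    qed
    have "P = take (q*n+1) P @ drop (q*n+1) P" by simp
    also have "drop (q*n+1) P = tl R" unfolding R_def by (simp add: drop_Suc tl_drop)
    finally have "P = wcomp (the_walk m n 1 j (n-1)) (cycs n r (p-1))"
      using r(2) tw q_def by (simp add: wcomp_def)
    then have "case_a m n p i j P" unfolding case_a_def using True k j r(1) q_def by blast
    then show ?thesis using nb nc1 True by blast
  next
    case False
    define k where "k = (i-2) div (n-1) + 1"
    define l where "l = (i-2) mod (n-1) + 2"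
    have iV: "1 \<le> i" "i \<le> m*(n-1)+1" using assms(4) unfolding dw_V_def by auto
    have i2: "i \<ge> 2" using iV False by simp
    have dm: "(i-2) = (i-2) div (n-1) * (n-1) + (i-2) mod (n-1)" by (rule div_mult_mod_eq[symmetric])
    have ikl: "i = (k-1)*(n-1)+l" unfolding k_def l_def using i2 dm by simp
    have M: "(i-2) mod (n-1) < n-1" using n3 by simp
    have l2: "2 \<le> l" "l \<le> n" unfolding l_def using M n3 by linarith+
    have km: "k \<in> {1..m}"
    proof -
      have "i - 2 < m*(n-1)" using iV i2 by simp
      then have "(i-2) div (n-1) < m" by (simp add: less_mult_imp_div_less)
      then show ?thesis unfolding k_def by simp
    qed
    define d0 where "d0 = n - l + 1"
    have P0': "P!0 = (k-1)*(n-1)+l" using P0 ikl by simp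
    have d0len: "0 + d0 < length P" using lenP pq d0_def l2 by simp
    have Pd0: "P!d0 = 1" using runEnd[OF W P0' km l2(1) l2(2) n3] d0len unfolding d0_def by simp
    define S where "S = drop d0 P"
    have WS: "is_walk m n S" using is_walk_drop[OF W] d0len S_def by simp
    have S0: "S!0 = 1" using Pd0 S_def d0len by simp
    have lenS: "length S = q*n + (l-1)" using S_def lenP pq d0_def l2 by simp
    obtain rs where rs: "\<forall>t\<in>{1..q}. rs t \<in> {1..m}" "take (q*n+1) S = cycs n rs q"
    proof -
      have "q*n < length S" using lenS l2 by simp
      then show ?thesis using lemC[OF WS n3 S0, of q] that by blast
    qed
    define A where "A = take (d0+1) P"
    have WA: "is_walk m n A" using is_walk_take[OF W] A_def by simp
    have lenA: "length A = n-l+2" using A_def d0len d0_def by simp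
    have A0: "A!0 = (k-1)*(n-1)+l" using A_def P0' by simp
    have lastA: "last A = 1" using A_def d0len Pd0 last_take_Suc[of d0 P] by simp
    have PAS: "P = A @ tl S" unfolding A_def S_def using split_at[of P d0] by simp
    have wA: "walk_from_to m n i 1 A" unfolding walk_from_to_def using WA A0 ikl lastA lenA
      by (simp add: hd0)
    have uniqA: "w = A" if "walk_from_to m n i 1 w" "length w = length A" for w
    proof -
      have Ww: "is_walk m n w" "hd w = i" using that unfolding walk_from_to_def by auto
      then have "w!0 = (k-1)*(n-1)+l" using that(2) lenA ikl by (simp add: hd0)
      then show ?thesis using det_nonhub[OF Ww(1) WA n3 _ A0 km l2] that(2) lenA by simp
    qed
    show ?thesis
    proof (cases "l = 2")
      case True
      have Scy: "S = cycs n rs q" using rs(2) lenS True by simp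
      have "last S = last P" unfolding S_def using d0len last_drop by simp
      then have j1: "j = 1" using lastP Scy cycs_last[OF n3] by simp
      have lA: "length A = n - 1 + 1" using lenA True n3 by simp
      have tw: "the_walk m n i 1 (n-1) = A"
      proof (rule the_walk_eq[OF wA lA])
        fix w assume "walk_from_to m n i 1 w" "length w = n - 1 + 1"
        then show "w = A" using uniqA[of w] lA by simp
      qed
      have "P = wcomp (cycs n rs (p-1)) (the_walk m n i 1 (n-1))"
        using PAS Scy tw q_def by (simp add: wcomp_def)
      then have "case_b m n p i j P" unfolding case_b_def using j1 km ikl True rs(1) q_def by blast
      then show ?thesis using na False nc2 j1 by blast
    next
      case False
      then have l3: "l \<ge> 3" using l2 by simp
      define T where "T = drop (q*n) S"
      have lenT: "length T = l - 1" using T_def lenS by simp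
      have WT: "is_walk m n T" using is_walk_drop[OF WS] T_def lenS l3 by simp
      have T0: "T!0 = 1"
      proof -
        have "take (q*n+1) S ! (q*n) = 1" using rs(2) cycs_nth_last n3 by simp
        then show ?thesis unfolding T_def using lenS l3 by simp
      qed
      obtain r0 where r0: "r0\<in>{1..m}" "T!1 = (r0-1)*(n-1)+2"
      proof -
        have "0 + 1 < length T" using lenT l3 by simp
        then show ?thesis using stepHub[OF WT, of 0] T0 n3 that by auto
      qed
      have d1: "2 + (l-3) \<le> n" "1 + (l-3) < length T" using lenT l2 l3 by auto
      have X: "T!(1+(l-3)) = (r0-1)*(n-1)+(2+(l-3))" using runA[OF WT r0(2) r0(1) _ n3 d1] by simp
      have e2: "2+(l-3) = l-1" using l3 by simp
      have "T!(1+(l-3)) = (r0-1)*(n-1)+(l-1)" using X by (simp only: e2)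
      moreover have "last T = T!(1+(l-3))"
      proof -
        have "T \<noteq> []" "1+(l-3) = length T - 1" using lenT l3 by auto
        then show ?thesis by (simp add: last_conv_nth)
      qed
      moreover have lastT: "last T = j"
      proof -
        have "last S = last P" unfolding S_def using d0len last_drop by simp
        moreover have "last T = last S" unfolding T_def using lenS l3 last_drop by simp
        ultimately show ?thesis using lastP by simp
      qed
      ultimately have j: "j = (r0-1)*(n-1)+(l-1)" by metis
      have ST: "S = cycs n rs q @ tl T"
      proof -
        have "S = take (q*n+1) S @ drop (q*n+1) S" by simp
        also have "drop (q*n+1) S = tl T" unfolding T_def by (simp add: drop_Suc tl_drop)
        finally show ?thesis using rs(2) by simp
      qed
      have wT: "walk_from_to m n 1 j T" unfolding walk_from_to_def
        using WT T0 lastT lenT l3 by (simp add: hd0)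
      have uniqT: "w = T" if "walk_from_to m n 1 j w" "length w = length T" for w
      proof -
        have Ww: "is_walk m n w" "hd w = 1" "last w = j" using that unfolding walk_from_to_def by auto
        then have "w!0 = 1" using that(2) lenT l3 by (simp add: hd0)
        then show ?thesis using det_hub[OF Ww(1) WT n3 _ T0, of "l-2"] that(2) lenT l3 l2 Ww(3) lastT
          by simp
      qed
      have shA: "shortest_walk m n i 1 = A"
      proof (rule shortest_eq[OF wA])
        fix w assume w: "walk_from_to m n i 1 w"
        have Ww: "is_walk m n w" "hd w = i" "last w = 1" using w unfolding walk_from_to_def by auto
        have "w \<noteq> []" using Ww unfolding is_walk_def by simp
        then have "w!0 = (k-1)*(n-1)+l" using Ww ikl by (simp add: hd0)
        then show "length A \<le> length w" using lb_nonhub[OF Ww(1) n3 _ km l2 Ww(3)] lenA by simp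
      next
        fix w assume "walk_from_to m n i 1 w" "length w = length A"
        then show "w = A" using uniqA by simp
      qed
      have shT: "shortest_walk m n 1 j = T"
      proof (rule shortest_eq[OF wT])
        fix w assume w: "walk_from_to m n 1 j w"
        have Ww: "is_walk m n w" "hd w = 1" "last w = j" using w unfolding walk_from_to_def by auto
        have "w \<noteq> []" using Ww unfolding is_walk_def by simp
        then have "w!0 = 1" using Ww by (simp add: hd0)
        moreover have "last w = (r0-1)*(n-1)+((l-2)+1)"
        proof -
          have "(l-2)+1 = l-1" using l3 by simp
          then show ?thesis using Ww(3) j by metis
        qed
        moreover have "1 \<le> l-2" "l-2 \<le> n-2" using l3 l2 by auto
        ultimately have "l-2+1 \<le> length w" using lb_hub[OF Ww(1) n3, of r0 "l-2"] r0(1) by blast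
        then show "length T \<le> length w" using lenT l3 by simp
      next
        fix w assume "walk_from_to m n 1 j w" "length w = length T"
        then show "w = T" using uniqT by simp
      qed
      have WAT: "is_walk m n (wcomp T A)" using is_walk_wcomp[OF WA WT] lastA T0 lenT l3
        by (simp add: hd0)
      have lenAT: "length (wcomp T A) = n" using lenA lenT l3 l2 by (simp add: wcomp_def)
      have wAT: "walk_from_to m n i j (wcomp T A)"
      proof -
        have Ane: "A \<noteq> []" using lenA by auto
        have tT: "tl T \<noteq> []" "last (tl T) = last T" using lenT l3 by (cases T; auto)+
        have "hd (wcomp T A) = i" using Ane wA unfolding wcomp_def walk_from_to_def by simp
        moreover have "last (wcomp T A) = j" using tT lastT unfolding wcomp_def by simp
        ultimately show ?thesis using WAT unfolding walk_from_to_def by simp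
      qed
      have uniqAT: "w = wcomp T A" if w: "walk_from_to m n i j w" "length w = n" for w
      proof -
        have Ww: "is_walk m n w" "hd w = i" "last w = j" using w unfolding walk_from_to_def by auto
        have wne: "w \<noteq> []" using Ww unfolding is_walk_def by simp
        have w0: "w!0 = (k-1)*(n-1)+l" using Ww wne ikl by (simp add: hd0)
        have dl: "0 + d0 < length w" using w(2) d0_def l3 l2 by simp
        have wd0: "w!d0 = 1" using runEnd[OF Ww(1) w0 km l2 n3] dl unfolding d0_def by simp
        have t1: "take (d0+1) w = A"
          apply (rule uniqA)
          unfolding walk_from_to_def using is_walk_take[OF Ww(1)] wne Ww w0 wd0 dl lenA d0_def
          by (auto simp: hd0 last_conv_nth ikl)
        have t2: "drop d0 w = T"
          apply (rule uniqT)
          unfolding walk_from_to_def using is_walk_drop[OF Ww(1)] wne Ww wd0 dl lenT d0_def w(2) l3 l2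
          by (auto simp: hd0)
        have "w = take (d0+1) w @ drop (d0+1) w" by simp
        also have "drop (d0+1) w = tl (drop d0 w)" by (simp add: drop_Suc tl_drop)
        finally show ?thesis using t1 t2 by (simp add: wcomp_def)
      qed
      have lAT: "length (wcomp T A) = n - 1 + 1" using lenAT n3 by simp
      have tw: "the_walk m n i j (n-1) = wcomp T A"
      proof (rule the_walk_eq[OF wAT lAT])
        fix w assume "walk_from_to m n i j w" "length w = n - 1 + 1"
        then show "w = wcomp T A" using uniqAT[of w] n3 by simp
      qed
      have ex1: "\<exists>!w. walk_from_to m n i j w \<and> length w = n"
        using wAT lenAT uniqAT by blast
      have cyne: "cycs n rs q \<noteq> []" using cycs_len[OF n3, of rs q] by auto
      have PP: "P = wcomp (shortest_walk m n 1 j) (wcomp (cycs n rs (p-1)) (shortest_walk m n i 1))"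
      proof -
        have "wcomp (shortest_walk m n 1 j) (wcomp (cycs n rs (p-1)) (shortest_walk m n i 1))
            = (A @ tl (cycs n rs q)) @ tl T" by (simp only: shA shT q_def[symmetric] wcomp_def)
        also have "\<dots> = A @ tl S" using ST cyne by simp
        finally show ?thesis using PAS by simp
      qed
      have c1: "\<exists>k\<in>{1..m}. \<exists>r\<in>{1..m}. \<exists>l\<in>{3..n}. i = (k-1)*(n-1)+l \<and> j = (r-1)*(n-1)+(l-1)"
      proof -
        have "l \<in> {3..n}" using l3 l2 by simp
        then show ?thesis using km r0(1) ikl j by blast
      qed
      have c2: "\<exists>rs. (\<forall>t\<in>{1..p-1}. rs t \<in> {1..m}) \<and>
          P = wcomp (shortest_walk m n 1 j) (wcomp (cycs n rs (p-1)) (shortest_walk m n i 1))"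
        using rs(1) PP q_def by blast
      have c3: "wcomp (shortest_walk m n 1 j) (shortest_walk m n i 1) = the_walk m n i j (n-1)"
        using shA shT tw by simp
      have "case_c m n p i j P" unfolding case_c_def using c1 c2 c3 ex1 by blast
      then have j1: "j \<noteq> 1" using j l3 by simp
      show ?thesis using na \<open>i \<noteq> 1\<close> nb2 j1 \<open>case_c m n p i j P\<close> by blast
    qed
  qed
qed

end
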